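(* Let $G$ be a finite Abelian group, let $S \subseteq G$ with $0 \notin S$, and let $\delta > 0$. If $\lambda(S) \geqslant (\delta - 1)|S|$, then $$\lambda\big(S \cup (-S)\big) \geqslant \Big(\frac{\delta}{2} - 1\Big)\,|S \cup (-S)|.$$
   Context: For $T \subseteq G$ with $0 \notin T$, $A(T)$ is the $G\times G$ $(0,1)$-matrix with $A(T)(x,y) = 1$ iff $y - x \in T$, and $\lambda(T) = \min\{\Re(\lambda) : A(T)v = \lambda v \text{ for some } v \neq \mathbf{0}\}$. The paper writes $\lambda(\mathcal{G}^*_S)$ for $\lambda(S\cup(-S))$, the smallest eigenvalue of the adjacency matrix $A(S\cup(-S))$ of the Cayley graph of $S$ (edges $xy$ with $x-y \in S$ or $y - x \in S$). *)

theory Defs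
  imports "HOL-Analysis.Analysis"
begin

definition adjA :: "('a::{ab_group_add,finite}) set \<Rightarrow> complex^('a::{ab_group_add,finite})^('a::{ab_group_add,finite})" where
  "adjA T = (\<chi> x y. if y - x \<in> T then 1 else 0)"

definition eigvalsA :: "'a::{ab_group_add,finite} set \<Rightarrow> complex set" where
  "eigvalsA T = {\<mu>. \<exists>v. v \<noteq> 0 \<and> adjA T *v v = \<mu> *s v}"

definition lam :: "'a::{ab_group_add,finite} set \<Rightarrow> real" where
  "lam T = Min (Re ` eigvalsA T)"

end

theory Submission
  imports Defs "HOL-Computational_Algebra.Fundamental_Theorem_Algebra"
begin

lemma mv_smult: "(M::complex^'n^'m) *v (c *s x) = c *s (M *v x)"
  by (simp add: matrix_vector_mult_def vec_eq_iff sum_distrib_left mult.left_commute)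

lemma mv_add: "(M::complex^'n^'m) *v (x + y) = M *v x + M *v y"
  by (simp add: matrix_vector_mult_def vec_eq_iff sum.distrib distrib_left)

definition papp :: "complex poly \<Rightarrow> complex^'n^'n \<Rightarrow> complex^'n \<Rightarrow> complex^'n" where
  "papp p M = fold_coeffs (\<lambda>a g v. a *s v + M *v g v) p (\<lambda>v. 0)"

lemma papp_0 [simp]: "papp 0 M v = 0"
  by (simp add: papp_def)

lemma papp_pCons [simp]: "papp (pCons a p) M v = a *s v + M *v papp p M v"
  by (cases "p = 0"; cases "a = 0"; simp add: papp_def)

lemma papp_add [simp]: "papp (p + q) M v = papp p M v + papp q M v"
proof (induct p arbitrary: q)
  case 0 then show ?case by simp
next
  case (pCons a p)
  then show ?case
    by (cases q) (simp add: mv_add vector_sadd_rdistrib algebra_simps)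
qed

lemma papp_smult [simp]: "papp (smult c p) M v = c *s papp p M v"
  by (induct p) (simp_all add: mv_smult vector_add_ldistrib vector_smult_assoc mult.commute)

lemma papp_lin_add: "papp p M (x + y) = papp p M x + papp p M y"
  by (induct p) (simp_all add: mv_add vector_add_ldistrib algebra_simps)

lemma papp_lin_smult: "papp p M (c *s x) = c *s papp p M x"
  by (induct p) (simp_all add: mv_smult vector_add_ldistrib vector_smult_assoc mult.commute)

lemma papp_lin_0 [simp]: "papp p M 0 = 0"
  by (induct p) simp_all

lemma papp_lin_sum: "finite A \<Longrightarrow> papp p M (\<Sum>i\<in>A. f i) = (\<Sum>i\<in>A. papp p M (f i))"
  by (induct A rule: finite_induct) (simp_all add: papp_lin_add)

lemma papp_sum: "finite A \<Longrightarrow> papp (\<Sum>i\<in>A. f i) M v = (\<Sum>i\<in>A. papp (f i) M v)"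
  by (induct A rule: finite_induct) simp_all

lemma papp_mult: "papp (p * q) M v = papp p M (papp q M v)"
  by (induct p arbitrary: v) (simp_all add: mult_pCons_left)

lemma papp_monom: "papp (monom a k) M v = a *s (((*v) M) ^^ k) v"
  by (induct k) (simp_all add: monom_Suc mv_smult monom_0)

lemma papp_eig: "M *v v = \<mu> *s v \<Longrightarrow> papp p M v = poly p \<mu> *s v"
  by (induct p) (simp_all add: mv_smult vector_smult_assoc vector_sadd_rdistrib mult.commute)

lemma papp_commute:
  assumes "\<And>x. B *v (M *v x) = M *v (B *v x)"
  shows "B *v papp p M v = papp p M (B *v v)"
  by (induct p) (simp_all add: mv_add mv_smult assms)

lemma ofreal_smult: "complex_of_real c *s (x::complex^'n) = c *\<^sub>R x"
proof -
  have "(complex_of_real c *s x) $ i = (c *\<^sub>R x) $ i" for i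
  proof -
    have "(c *\<^sub>R x) $ i = c *\<^sub>R (x $ i)" by simp
    also have "\<dots> = complex_of_real c * x $ i" by (rule scaleR_conv_of_real)
    finally show ?thesis by simp
  qed
  then show ?thesis by (simp add: vec_eq_iff)
qed

lemma krylov_dep:
  fixes K :: "nat \<Rightarrow> complex^'n"
  shows "\<exists>c. (\<exists>k\<le>DIM(complex^'n). c k \<noteq> 0) \<and> (\<Sum>k\<le>DIM(complex^'n). c k *\<^sub>R K k) = 0"
proof (cases "inj_on K {..DIM(complex^'n)}")
  case True
  let ?F = "K ` {..DIM(complex^'n)}"
  have "card ?F = Suc DIM(complex^'n)" using True by (simp add: card_image)
  then have "real_vector.dependent ?F" by (intro dependent_biggerset) simp
  then obtain u where u: "\<exists>w\<in>?F. u w \<noteq> 0" "(\<Sum>w\<in>?F. u w *\<^sub>R w) = 0"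
  proof -
    have fin: "finite ?F" by simp
    show ?thesis using that real_vector.dependent_finite[OF fin] \<open>real_vector.dependent ?F\<close> by blast
  qed
  have s0: "(\<Sum>k\<le>DIM(complex^'n). u (K k) *\<^sub>R K k) = 0"
    using u(2) sum.reindex[OF True, of "\<lambda>w. u w *\<^sub>R w"] by simp
  moreover have "\<exists>k\<le>DIM(complex^'n). u (K k) \<noteq> 0" using u(1) by auto
  ultimately show ?thesis using s0 by (intro exI[of _ "\<lambda>k. u (K k)"] conjI)
next
  case False
  then obtain j k where jk: "j \<le> DIM(complex^'n)" "k \<le> DIM(complex^'n)" "j \<noteq> k" "K j = K k"
    unfolding inj_on_def by auto
  let ?c = "\<lambda>i. (if i = j then 1 else 0) - (if i = k then 1 else (0::real))"
  have e: "\<And>i. ?c i *\<^sub>R K i = (if i = j then K i else 0) - (if i = k then K i else 0)"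
    by simp
  have s0: "(\<Sum>i\<le>DIM(complex^'n). ?c i *\<^sub>R K i) = 0"
    unfolding e sum_subtractf using jk by simp
  moreover have "?c j \<noteq> 0" using jk by simp
  ultimately show ?thesis using jk s0 by (intro exI[of _ ?c] conjI) auto
qed

lemma krylov:
  fixes M :: "complex^'n^'n"
  shows "\<exists>p. p \<noteq> 0 \<and> papp p M v = 0"
proof -
  let ?N = "DIM(complex^'n)"
  obtain c where c: "\<exists>k\<le>?N. c k \<noteq> 0" "(\<Sum>k\<le>?N. c k *\<^sub>R (((*v) M) ^^ k) v) = 0"
    using krylov_dep[of "\<lambda>k. (((*v) M) ^^ k) v"] by blast
  define p where "p = (\<Sum>k\<le>?N. monom (complex_of_real (c k)) k)"
  have "coeff p k = complex_of_real (c k)" if "k \<le> ?N" for k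
    using that by (simp add: p_def coeff_sum coeff_monom)
  then have "p \<noteq> 0" using c(1) by force
  moreover have "papp p M v = 0"
    using c(2) by (simp add: p_def papp_sum papp_monom ofreal_smult)
  ultimately show ?thesis by blast
qed

lemma mv_diff: "(M::complex^'n^'m) *v (x - y) = M *v x - M *v y"
  by (simp add: matrix_vector_mult_def vec_eq_iff sum_subtractf right_diff_distrib)

lemma common_eig:
  fixes M B :: "complex^'n^'n"
  assumes comm: "\<And>x. B *v (M *v x) = M *v (B *v x)"
  shows "B *v v = \<mu> *s v \<Longrightarrow> v \<noteq> 0 \<Longrightarrow> p \<noteq> 0 \<Longrightarrow> papp p M v = 0 \<Longrightarrow>
    \<exists>w \<nu>. w \<noteq> 0 \<and> B *v w = \<mu> *s w \<and> M *v w = \<nu> *s w"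
proof (induct "degree p" arbitrary: p v rule: less_induct)
  case less
  show ?case
  proof (cases "degree p = 0")
    case True
    then obtain c where "p = [:c:]" by (metis degree_eq_zeroE)
    with less show ?thesis by simp
  next
    case False
    then obtain r where r: "poly p r = 0"
      using fundamental_theorem_of_algebra constant_degree by metis
    then have "[:-r, 1:] dvd p" by (simp add: dvd_iff_poly_eq_0)
    then obtain q where pq: "p = q * [:-r, 1:]" by (metis dvd_def mult.commute)
    have q0: "q \<noteq> 0" using pq less.prems(3) by auto
    have dq: "degree q < degree p" using pq degree_mult_eq[OF q0, of "[:-r, 1:]"] by simp
    define v' where "v' = M *v v - r *s v"
    have e1: "papp p M v = papp q M (papp [:-r, 1:] M v)"
      unfolding pq by (rule papp_mult)
    have e2: "papp [:-r, 1:] M v = v'"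
      by (simp add: v'_def vector_smult_lneg)
    have pv: "papp p M v = papp q M v'" using e1 e2 by simp
    show ?thesis
    proof (cases "v' = 0")
      case True
      then have "M *v v = r *s v" by (simp add: v'_def)
      then show ?thesis using less.prems(2) by (intro exI[of _ v] exI[of _ r] conjI less.prems(1))
    next
      case False
      have "B *v v' = \<mu> *s v'"
        by (simp add: v'_def mv_diff mv_smult comm less.prems(1) vector_ssub_ldistrib vector_smult_assoc mult.commute)
      moreover have "papp q M v' = 0" using less.prems(4) pv by simp
      ultimately show ?thesis by (rule less.hyps[OF dq _ False q0])
    qed
  qed
qed

lemma eig_finite:
  fixes M :: "complex^'n^'n"
  shows "finite {\<mu>. \<exists>v. v \<noteq> 0 \<and> M *v v = \<mu> *s v}"
proof -
  have "\<forall>i. \<exists>p. p \<noteq> 0 \<and> papp p M (axis i 1) = 0" using krylov by blast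
  then obtain P where P: "\<And>i. P i \<noteq> 0" "\<And>i. papp (P i) M (axis i 1) = 0" by metis
  define q where "q = (\<Prod>i\<in>UNIV. P i)"
  have q0: "q \<noteq> 0" using P(1) by (simp add: q_def)
  have qi: "papp q M (axis i 1) = 0" for i
  proof -
    have "q = (\<Prod>j\<in>UNIV-{i}. P j) * P i" by (simp add: q_def prod.remove mult.commute)
    then show ?thesis by (simp add: papp_mult P(2))
  qed
  have qall: "papp q M x = 0" for x
  proof -
    have "papp q M x = papp q M (\<Sum>i\<in>UNIV. x$i *s axis i 1)" by (simp add: basis_expansion)
    also have "\<dots> = (\<Sum>i\<in>UNIV. x$i *s papp q M (axis i 1))" by (simp add: papp_lin_sum papp_lin_smult)
    also have "\<dots> = 0" by (simp add: qi)
    finally show ?thesis .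
  qed
  have "{\<mu>. \<exists>v. v \<noteq> 0 \<and> M *v v = \<mu> *s v} \<subseteq> {x. poly q x = 0}"
  proof safe
    fix \<mu> v assume v: "v \<noteq> 0" "M *v v = \<mu> *s v"
    then have "poly q \<mu> *s v = 0" using papp_eig[of M v \<mu> q] qall by simp
    with v show "poly q \<mu> = 0" by simp
  qed
  then show ?thesis using poly_roots_finite[OF q0] finite_subset by blast
qed

lemma eig_exists:
  fixes M :: "complex^'n^'n"
  shows "\<exists>\<mu> v. v \<noteq> 0 \<and> M *v v = \<mu> *s v"
proof -
  obtain p where p: "p \<noteq> 0" "papp p M (axis undefined 1) = 0" using krylov by blast
  have a: "axis undefined (1::complex) \<noteq> (0::complex^'n)" by (simp add: axis_eq_0_iff)
  have "\<exists>w \<nu>. w \<noteq> 0 \<and> mat 1 *v w = 1 *s w \<and> M *v w = \<nu> *s w"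
    by (rule common_eig[of "mat 1" M, OF _ _ a p]) simp_all
  then show ?thesis by auto
qed

lemma lam_le:
  fixes T :: "'a::{ab_group_add,finite} set"
  assumes "\<mu> \<in> eigvalsA T" shows "lam T \<le> Re \<mu>"
proof -
  have "finite (eigvalsA T)" unfolding eigvalsA_def by (rule eig_finite)
  then show ?thesis unfolding lam_def using assms by (intro Min_le) auto
qed

lemma lam_ge:
  fixes T :: "'a::{ab_group_add,finite} set"
  assumes "\<And>\<mu>. \<mu> \<in> eigvalsA T \<Longrightarrow> b \<le> Re \<mu>" shows "b \<le> lam T"
proof -
  have "finite (eigvalsA T)" unfolding eigvalsA_def by (rule eig_finite)
  moreover have "eigvalsA T \<noteq> {}" unfolding eigvalsA_def using eig_exists[of "adjA T"] by auto
  ultimately show ?thesis unfolding lam_def using assms by (subst Min_ge_iff) auto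
qed

lemma sum_neg_reindex:
  fixes g :: "'a::{ab_group_add,finite} \<Rightarrow> 'b::comm_monoid_add"
  shows "(\<Sum>y\<in>UNIV. g y) = (\<Sum>y\<in>UNIV. g (c - y))"
  by (rule sum.reindex_bij_witness[of _ "\<lambda>y. c - y" "\<lambda>y. c - y"]) auto

lemma sum_shift_reindex:
  fixes g :: "'a::{ab_group_add,finite} \<Rightarrow> 'b::comm_monoid_add"
  shows "(\<Sum>y\<in>UNIV. g y) = (\<Sum>y\<in>UNIV. g (y + c))"
  by (rule sum.reindex_bij_witness[of _ "\<lambda>y. y + c" "\<lambda>y. y - c"]) auto

lemma adjA_mv: "(adjA T *v x) $ z = (\<Sum>y\<in>UNIV. if y - z \<in> T then x $ y else 0)"
  unfolding adjA_def matrix_vector_mult_def by (auto intro!: sum.cong)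

lemma adjA_mv_shift:
  fixes T :: "'a::{ab_group_add,finite} set"
  shows "(adjA T *v x) $ z = (\<Sum>t\<in>T. x $ (z + t))"
proof -
  have "(adjA T *v x) $ z = (\<Sum>t\<in>UNIV. if (t + z) - z \<in> T then x $ (t + z) else 0)"
    unfolding adjA_mv by (rule sum_shift_reindex)
  also have "\<dots> = (\<Sum>t\<in>UNIV. if t \<in> T then x $ (z + t) else 0)"
    by (intro sum.cong refl) (simp add: add.commute)
  also have "\<dots> = (\<Sum>t\<in>T. x $ (z + t))"
    by (simp add: sum.inter_restrict[symmetric])
  finally show ?thesis .
qed

lemma adjA_comm:
  fixes T1 T2 :: "'a::{ab_group_add,finite} set"
  shows "adjA T1 *v (adjA T2 *v x) = adjA T2 *v (adjA T1 *v x)"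
proof -
  have "(adjA T1 *v (adjA T2 *v x)) $ z = (adjA T2 *v (adjA T1 *v x)) $ z" for z
  proof -
    have "(adjA T1 *v (adjA T2 *v x)) $ z =
      (\<Sum>y\<in>UNIV. \<Sum>u\<in>UNIV. if y - z \<in> T1 \<and> u - y \<in> T2 then x $ u else 0)"
      by (simp add: adjA_mv) (intro sum.cong refl; simp add: adjA_mv)
    also have "\<dots> = (\<Sum>u\<in>UNIV. \<Sum>y\<in>UNIV. if y - z \<in> T1 \<and> u - y \<in> T2 then x $ u else 0)"
      by (rule sum.swap)
    also have "\<dots> = (\<Sum>u\<in>UNIV. \<Sum>y\<in>UNIV. if (z + u - y) - z \<in> T1 \<and> u - (z + u - y) \<in> T2 then x $ u else 0)"
      by (intro sum.cong refl sum_neg_reindex)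
    also have "\<dots> = (\<Sum>u\<in>UNIV. \<Sum>y\<in>UNIV. if y - z \<in> T2 \<and> u - y \<in> T1 then x $ u else 0)"
      by (intro sum.cong refl) (auto simp: algebra_simps)
    also have "\<dots> = (\<Sum>y\<in>UNIV. \<Sum>u\<in>UNIV. if y - z \<in> T2 \<and> u - y \<in> T1 then x $ u else 0)"
      by (rule sum.swap)
    also have "\<dots> = (adjA T2 *v (adjA T1 *v x)) $ z"
      by (simp add: adjA_mv) (intro sum.cong refl; simp add: adjA_mv)
    finally show ?thesis .
  qed
  then show ?thesis by (simp add: vec_eq_iff)
qed

lemma aux_half: "- (m::real) \<le> R \<Longrightarrow> 2 * m \<le> A + B \<Longrightarrow> - (A + B) / 2 \<le> R"
  by (simp add: field_simps)

lemma key_ineq: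
  fixes w :: "complex^('a::{ab_group_add,finite})" and N :: "'a set"
  shows "Re (\<Sum>x\<in>UNIV. cnj (w$x) * (adjA N *v w)$x) \<ge> - real (card N) * (\<Sum>x\<in>UNIV. (cmod (w$x))^2)"
proof -
  let ?a = "\<lambda>x. (cmod (w$x))^2"
  have pt: "- ((cmod p)^2 + (cmod q)^2) / 2 \<le> Re (cnj p * q)" for p q :: complex
  proof -
    have "\<bar>Re (cnj p * q)\<bar> \<le> cmod (cnj p * q)" by (rule abs_Re_le_cmod)
    also have "\<dots> = cmod p * cmod q" by (simp add: norm_mult)
    finally have "- (cmod p * cmod q) \<le> Re (cnj p * q)" by linarith
    moreover have "2 * (cmod p * cmod q) \<le> (cmod p)^2 + (cmod q)^2"
      using sum_squares_bound[of "cmod p" "cmod q"] by (simp add: mult.assoc)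
    ultimately show ?thesis by (rule aux_half)
  qed
  have "Re (\<Sum>x\<in>UNIV. cnj (w$x) * (adjA N *v w)$x) = (\<Sum>x\<in>UNIV. \<Sum>t\<in>N. Re (cnj (w$x) * w$(x+t)))"
    by (simp add: adjA_mv_shift sum_distrib_left Re_sum)
  also have "\<dots> \<ge> (\<Sum>x\<in>UNIV. \<Sum>t\<in>N. - (?a x + ?a (x+t)) / 2)"
    by (intro sum_mono pt)
  also have "(\<Sum>x\<in>UNIV. \<Sum>t\<in>N. - (?a x + ?a (x+t)) / 2) =
      - ((\<Sum>x\<in>UNIV. \<Sum>t\<in>N. ?a x) + (\<Sum>x\<in>UNIV. \<Sum>t\<in>N. ?a (x+t))) / 2"
    by (simp only: sum_divide_distrib[symmetric] sum_negf sum.distrib minus_divide_left)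
  also have "(\<Sum>x\<in>UNIV. \<Sum>t\<in>N. ?a (x+t)) = (\<Sum>t\<in>N. \<Sum>x\<in>UNIV. ?a (x+t))"
    by (rule sum.swap)
  also have "(\<Sum>t\<in>N. \<Sum>x\<in>UNIV. ?a (x+t)) = (\<Sum>t\<in>N. \<Sum>x\<in>UNIV. ?a x)"
  proof (rule sum.cong[OF refl])
    fix t show "(\<Sum>x\<in>UNIV. ?a (x+t)) = (\<Sum>x\<in>UNIV. ?a x)"
      using sum_shift_reindex[of ?a t] by simp
  qed
  also have "(\<Sum>t\<in>N. \<Sum>x\<in>UNIV. ?a x) = real (card N) * (\<Sum>x\<in>UNIV. ?a x)"
    by simp
  also have "(\<Sum>x\<in>UNIV. \<Sum>t\<in>N. ?a x) = real (card N) * (\<Sum>x\<in>UNIV. ?a x)"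
    by (simp add: sum_distrib_left mult.commute)
  finally show ?thesis by simp
qed

theorem lemma7p13:
  fixes S :: "'a::{ab_group_add,finite} set" and \<delta> :: real
  assumes "0 \<notin> S" and "\<delta> > 0"
    and "lam S \<ge> (\<delta> - 1) * real (card S)"
  shows "lam (S \<union> uminus ` S) \<ge> (\<delta> / 2 - 1) * real (card (S \<union> uminus ` S))"
proof -
  define N where "N = uminus ` S - S"
  define U where "U = S \<union> uminus ` S"
  have UN: "U = S \<union> N" "S \<inter> N = {}" by (auto simp: N_def U_def)
  have cU: "card U = card S + card N" using UN by (simp add: card_Un_disjoint)
  have "card N \<le> card (uminus ` S)" unfolding N_def by (intro card_mono) auto
  also have "\<dots> \<le> card S" by (rule card_image_le) simp
  finally have cN: "card N \<le> card S" .
  have addU: "adjA U *v x = adjA S *v x + adjA N *v x" for x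
    by (simp add: vec_eq_iff UN adjA_mv_shift sum.union_disjoint)
  have "(\<delta> / 2 - 1) * real (card U) \<le> lam U"
  proof (rule lam_ge)
    fix \<mu> assume "\<mu> \<in> eigvalsA U"
    then obtain v where v: "adjA U *v v = \<mu> *s v" "v \<noteq> 0" by (auto simp: eigvalsA_def)
    obtain p where p: "p \<noteq> 0" "papp p (adjA S) v = 0" using krylov by blast
    have "\<exists>w \<nu>. w \<noteq> 0 \<and> adjA U *v w = \<mu> *s w \<and> adjA S *v w = \<nu> *s w"
      by (rule common_eig[OF adjA_comm v p])
    then obtain w \<nu> where w: "w \<noteq> 0" "adjA U *v w = \<mu> *s w" "adjA S *v w = \<nu> *s w"
      by blast
    have lS: "lam S \<le> Re \<nu>" by (rule lam_le) (use w in \<open>auto simp: eigvalsA_def\<close>)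
    define nrm where "nrm = (\<Sum>x\<in>UNIV. (cmod (w$x))^2)"
    obtain x0 where "w $ x0 \<noteq> 0" using w(1) by (auto simp: vec_eq_iff)
    then have npos: "nrm > 0" unfolding nrm_def
      by (intro sum_pos2[of UNIV x0]) auto
    define H where "H = (\<Sum>x\<in>UNIV. cnj (w$x) * (adjA N *v w)$x)"
    have nn: "(\<Sum>x\<in>UNIV. cnj (w$x) * w$x) = of_real nrm"
      unfolding nrm_def of_real_sum
      by (intro sum.cong refl) (simp only: complex_norm_square mult.commute)
    have e1: "(\<Sum>x\<in>UNIV. cnj (w$x) * (adjA U *v w)$x) = \<mu> * (\<Sum>x\<in>UNIV. cnj (w$x) * w$x)"
      using w(2) by (simp add: sum_distrib_left mult.left_commute)
    have e2: "(\<Sum>x\<in>UNIV. cnj (w$x) * (adjA U *v w)$x) = \<nu> * (\<Sum>x\<in>UNIV. cnj (w$x) * w$x) + H"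
      using w(3) by (simp add: addU H_def distrib_left sum.distrib sum_distrib_left mult.left_commute)
    have "\<mu> * of_real nrm = \<nu> * of_real nrm + H" using e1 e2 nn by simp
    then have "Re (\<mu> * of_real nrm) = Re (\<nu> * of_real nrm + H)" by simp
    then have "Re \<mu> * nrm = Re \<nu> * nrm + Re H" by simp
    moreover have "Re H \<ge> - real (card N) * nrm" unfolding H_def nrm_def by (rule key_ineq)
    ultimately have "(Re \<nu> - real (card N)) * nrm \<le> Re \<mu> * nrm" by (simp add: algebra_simps)
    then have rm: "Re \<nu> - real (card N) \<le> Re \<mu>" using npos by simp
    have dsn: "\<delta> * (real (card S) - real (card N)) \<ge> 0" using assms(2) cN by simp
    have "(\<delta> / 2 - 1) * real (card U) = (\<delta> - 1) * real (card S) - real (card N) - \<delta> * (real (card S) - real (card N)) / 2"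
      by (simp add: cU field_simps)
    also have "\<dots> \<le> Re \<mu>" using rm lS assms(3) dsn by linarith
    finally show "(\<delta> / 2 - 1) * real (card U) \<le> Re \<mu>" .
  qed
  then show ?thesis by (simp add: U_def)
qed

end
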